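(* Let $n\ge 1$. For $i,j\in\{1,\dots,n\}$ let $L_i>0$, $\mu_i>0$, $\theta_i\ge 0$, $\lambda_i\ge 0$ and $\gamma_{ij}\ge 0$ be real numbers with $\gamma_{ii}=0$ and $\gamma_{ij}=\gamma_{ji}$. Let $A$ be the $n\times n$ matrix with $A_{ii}=-\big(\frac{\mu_i}{L_i}+\theta_i+\sum_{j=1}^n\frac{\gamma_{ij}}{L_i}\big)$ and $A_{ij}=\frac{\gamma_{ij}}{L_j}$ for $i\ne j$, and $b\in\mathbb{R}^n$ with $b_i=\mu_i-\lambda_i$. Let $y(t)=(y_1(t),\dots,y_n(t))^t$ be the solution of $y'(t)=Ay(t)+b$ and $y^*=-A^{-1}b=(y_1^*,\dots,y_n^* )^t$ its equilibrium point. Put $$L_a=\sum_{i=1}^nL_i,\quad \mu_a=\sum_{i=1}^n\mu_i,\quad \lambda_a=\sum_{i=1}^n\lambda_i,\quad \bar\theta=\frac1n\sum_{i=1}^n\theta_i,$$ let $y_a(t)$ be the solution of the scalar equation $y_a'(t)=-\big(\frac{\mu_a}{L_a}+\bar\theta\big)y_a(t)+(\mu_a-\lambda_a)$, and let $y_a^*=\frac{\mu_a-\lambda_a}{\mu_a/L_a+\bar\theta}$ be its equilibrium value. If $$\frac{\mu_1}{L_1}=\frac{\mu_2}{L_2}=\cdots=\frac{\mu_n}{L_n}\quad\text{and}\quad \theta_1=\cdots=\theta_n,$$ then $\sum_{i=1}^n y_i^*=y_a^*$. Furthermore, if in addition $\sum_{i=1}^n y_i(0)=y_a(0)$, then $\sum_{i=1}^n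 y_i(t)=y_a(t)$ for all $t\ge 0$.
   Context: The vector system models the inventory levels of $n$ warehouses in one echelon with maximum levels $L_i$, maximum supply rates $\mu_i$, deterioration percentages $\theta_i$, demand rates $\lambda_i$ and maximum lateral transshipment rates $\gamma_{ij}$; the scalar equation is the aggregated model in which the $n$ warehouses are combined into one warehouse. The matrix $A$ is invertible (all its eigenvalues have negative real part). *)

theory Defs
  imports "HOL-Analysis.Analysis"
begin

end

theory Submission
  imports Defs
begin

theorem proposition4:
  fixes L \<mu> \<theta> lam :: "'n::finite \<Rightarrow> real"
    and \<gamma> :: "'n \<Rightarrow> 'n \<Rightarrow> real"
    and A :: "real^'n^'n" and b :: "real^'n"
    and y :: "real \<Rightarrow> real^'n" and ya :: "real \<Rightarrow> real"
  assumes L_pos: "\<And>i. L i > 0"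
    and mu_pos: "\<And>i. \<mu> i > 0"
    and theta_nn: "\<And>i. \<theta> i \<ge> 0"
    and lambda_nn: "\<And>i. lam i \<ge> 0"
    and gamma_nn: "\<And>i j. \<gamma> i j \<ge> 0"
    and gamma_diag: "\<And>i. \<gamma> i i = 0"
    and gamma_sym: "\<And>i j. \<gamma> i j = \<gamma> j i"
    and A_def: "A = (\<chi> i j. if i = j
                    then - (\<mu> i / L i + \<theta> i + (\<Sum>k\<in>UNIV. \<gamma> i k / L i))
                    else \<gamma> i j / L j)"
    and b_def: "b = (\<chi> i. \<mu> i - lam i)"
    and y_sol: "\<And>t. t \<ge> 0 \<Longrightarrow>
        (y has_vector_derivative (A *v y t + b)) (at t within {0..})"
    and ya_sol: "\<And>t. t \<ge> 0 \<Longrightarrow>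
        (ya has_real_derivative
           (- ((\<Sum>i\<in>UNIV. \<mu> i) / (\<Sum>i\<in>UNIV. L i)
               + (\<Sum>i\<in>UNIV. \<theta> i) / real CARD('n)) * ya t
            + ((\<Sum>i\<in>UNIV. \<mu> i) - (\<Sum>i\<in>UNIV. lam i)))) (at t within {0..})"
    and ratio_eq: "\<And>i j. \<mu> i / L i = \<mu> j / L j"
    and theta_eq: "\<And>i j. \<theta> i = \<theta> j"
  shows "(\<Sum>i\<in>UNIV. (- (matrix_inv A *v b)) $ i)
           = ((\<Sum>i\<in>UNIV. \<mu> i) - (\<Sum>i\<in>UNIV. lam i))
             / ((\<Sum>i\<in>UNIV. \<mu> i) / (\<Sum>i\<in>UNIV. L i)
                + (\<Sum>i\<in>UNIV. \<theta> i) / real CARD('n))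
         \<and> ((\<Sum>i\<in>UNIV. y 0 $ i) = ya 0 \<longrightarrow>
              (\<forall>t\<ge>0. (\<Sum>i\<in>UNIV. y t $ i) = ya t))"
proof -
  obtain i0 :: 'n where True by simp
  define c where "c = \<mu> i0 / L i0 + \<theta> i0"
  have ci: "\<mu> j / L j + \<theta> j = c" for j
    unfolding c_def using ratio_eq[of j i0] theta_eq[of j i0] by simp
  have cpos: "c > 0" unfolding c_def using mu_pos[of i0] L_pos[of i0] theta_nn[of i0]
    by (simp add: add_pos_nonneg)
  have Aent: "A $ i $ j = \<gamma> i j / L j - (if i = j then \<mu> j / L j + \<theta> j + (\<Sum>k\<in>UNIV. \<gamma> j k / L j) else 0)" for i j
    unfolding A_def using gamma_diag[of j] by auto
  have colsum: "(\<Sum>i\<in>UNIV. A $ i $ j) = - c" for j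
  proof -
    have "(\<Sum>i\<in>UNIV. A $ i $ j) = (\<Sum>i\<in>UNIV. \<gamma> i j / L j) - (\<mu> j / L j + \<theta> j + (\<Sum>k\<in>UNIV. \<gamma> j k / L j))"
      by (simp only: Aent sum_subtractf) simp
    also have "(\<Sum>i\<in>UNIV. \<gamma> i j / L j) = (\<Sum>k\<in>UNIV. \<gamma> j k / L j)"
      using gamma_sym by simp
    finally show ?thesis using ci[of j] by simp
  qed
  have sumAv: "(\<Sum>i\<in>UNIV. (A *v x) $ i) = - c * (\<Sum>i\<in>UNIV. x $ i)" for x
  proof -
    have "(\<Sum>i\<in>UNIV. (A *v x) $ i) = (\<Sum>i\<in>UNIV. \<Sum>j\<in>UNIV. A $ i $ j * x $ j)"
      by (simp add: matrix_vector_mult_def)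
    also have "\<dots> = (\<Sum>j\<in>UNIV. (\<Sum>i\<in>UNIV. A $ i $ j) * x $ j)"
      by (subst sum.swap) (simp add: sum_distrib_right)
    also have "\<dots> = - c * (\<Sum>i\<in>UNIV. x $ i)"
      by (simp add: colsum sum_distrib_left)
    finally show ?thesis .
  qed
  have sumL: "(\<Sum>i\<in>UNIV. \<mu> i) / (\<Sum>i\<in>UNIV. L i) + (\<Sum>i\<in>UNIV. \<theta> i) / real CARD('n) = c"
  proof -
    define r where "r = \<mu> i0 / L i0"
    have mu: "\<mu> i = r * L i" for i
      using ratio_eq[of i i0] L_pos[of i] unfolding r_def by (simp add: field_simps)
    have Lp: "(\<Sum>i\<in>UNIV. L i) > 0" using L_pos by (simp add: sum_pos)
    have "(\<Sum>i\<in>UNIV. \<mu> i) / (\<Sum>i\<in>UNIV. L i) = r"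
      using Lp by (simp add: mu sum_distrib_left[symmetric])
    moreover have "(\<Sum>i\<in>UNIV. \<theta> i) = real CARD('n) * \<theta> i0"
      using sum.cong[of UNIV UNIV \<theta> "\<lambda>_. \<theta> i0"] theta_eq by simp
    ultimately show ?thesis unfolding c_def r_def by simp
  qed
  have sumb: "(\<Sum>i\<in>UNIV. b $ i) = (\<Sum>i\<in>UNIV. \<mu> i) - (\<Sum>i\<in>UNIV. lam i)"
    by (simp add: b_def sum_subtractf)
  have ker: "transpose A *v v = 0 \<Longrightarrow> v = 0" for v
  proof -
    assume v0: "transpose A *v v = 0"
    define m where "m = Max (range (\<lambda>i. \<bar>v $ i\<bar>))"
    obtain j where j: "\<bar>v $ j\<bar> = m"
    proof -
      have "m \<in> range (\<lambda>i. \<bar>v $ i\<bar>)" unfolding m_def by (rule Max_in) auto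
      thus ?thesis using that by auto
    qed
    have jm: "\<bar>v $ i\<bar> \<le> \<bar>v $ j\<bar>" for i
      unfolding j m_def by (rule Max_ge) auto
    have "(transpose A *v v) $ j = 0" using v0 by simp
    hence eq: "(\<Sum>i\<in>UNIV. A $ i $ j * v $ i) = 0"
      by (simp add: matrix_vector_mult_def transpose_def)
    have "(\<Sum>i\<in>UNIV. A $ i $ j * v $ i) = (\<Sum>i\<in>UNIV. \<gamma> i j / L j * v $ i) - (c + (\<Sum>k\<in>UNIV. \<gamma> j k / L j)) * v $ j"
    proof -
      have pt: "A $ i $ j * v $ i = \<gamma> i j / L j * v $ i - (if i = j then (c + (\<Sum>k\<in>UNIV. \<gamma> j k / L j)) * v $ j else 0)" for i
        using ci[of j] by (simp add: Aent algebra_simps)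
      show ?thesis by (simp only: pt sum_subtractf) simp
    qed
    with eq have e2: "(c + (\<Sum>k\<in>UNIV. \<gamma> j k / L j)) * v $ j = (\<Sum>i\<in>UNIV. \<gamma> i j / L j * v $ i)"
      by simp
    have "(c + (\<Sum>k\<in>UNIV. \<gamma> j k / L j)) * \<bar>v $ j\<bar> = \<bar>\<Sum>i\<in>UNIV. \<gamma> i j / L j * v $ i\<bar>"
    proof -
      have "0 \<le> c + (\<Sum>k\<in>UNIV. \<gamma> j k / L j)"
        using cpos gamma_nn L_pos by (intro add_nonneg_nonneg sum_nonneg divide_nonneg_pos) (auto intro: less_imp_le)
      thus ?thesis using e2[symmetric] by (simp add: abs_mult)
    qed
    also have "\<dots> \<le> (\<Sum>i\<in>UNIV. \<bar>\<gamma> i j / L j * v $ i\<bar>)" by (rule sum_abs)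
    also have "\<dots> \<le> (\<Sum>i\<in>UNIV. \<gamma> i j / L j * \<bar>v $ j\<bar>)"
    proof (rule sum_mono)
      fix i
      have g: "\<gamma> i j / L j \<ge> 0" using gamma_nn[of i j] L_pos[of j] by simp
      show "\<bar>\<gamma> i j / L j * v $ i\<bar> \<le> \<gamma> i j / L j * \<bar>v $ j\<bar>"
      proof -
        have "\<bar>\<gamma> i j / L j * v $ i\<bar> = \<gamma> i j / L j * \<bar>v $ i\<bar>" using g by (simp only: abs_mult abs_of_nonneg)
        also have "\<dots> \<le> \<gamma> i j / L j * \<bar>v $ j\<bar>" by (rule mult_left_mono[OF jm[of i] g]) 
        finally show ?thesis .
      qed
    qed
    also have "\<dots> = (\<Sum>k\<in>UNIV. \<gamma> j k / L j) * \<bar>v $ j\<bar>"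
      using gamma_sym by (simp add: sum_distrib_right)
    finally have "c * \<bar>v $ j\<bar> \<le> 0" by (simp add: algebra_simps)
    with cpos have "\<bar>v $ j\<bar> \<le> 0" by (simp add: mult_le_0_iff)
    hence "\<bar>v $ i\<bar> \<le> 0" for i using jm[of i] by linarith
    thus "v = 0" by (simp add: vec_eq_iff)
  qed
  have "\<exists>B. B ** transpose A = mat 1"
    using ker by (simp add: matrix_left_invertible_ker)
  hence "\<exists>B. A ** B = mat 1" by (simp add: left_invertible_transpose)
  hence "invertible A" by (simp add: invertible_right_inverse)
  hence "A ** matrix_inv A = mat 1 \<and> matrix_inv A ** A = mat 1"
    unfolding invertible_def matrix_inv_def by (rule someI_ex)
  hence Au: "A *v (matrix_inv A *v b) = b"
    by (simp add: matrix_vector_mul_assoc)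
  have part1: "(\<Sum>i\<in>UNIV. (- (matrix_inv A *v b)) $ i)
           = ((\<Sum>i\<in>UNIV. \<mu> i) - (\<Sum>i\<in>UNIV. lam i))
             / ((\<Sum>i\<in>UNIV. \<mu> i) / (\<Sum>i\<in>UNIV. L i)
                + (\<Sum>i\<in>UNIV. \<theta> i) / real CARD('n))"
  proof -
    have "(\<Sum>i\<in>UNIV. b $ i) = - c * (\<Sum>i\<in>UNIV. (matrix_inv A *v b) $ i)"
      using sumAv[of "matrix_inv A *v b"] Au by simp
    thus ?thesis using cpos unfolding sumL sumb[symmetric]
      by (simp add: sum_negf field_simps)
  qed
  have part2: "(\<Sum>i\<in>UNIV. y t $ i) = ya t" if y0: "(\<Sum>i\<in>UNIV. y 0 $ i) = ya 0" and t: "t \<ge> 0" for t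
  proof -
    define g where "g s = ((\<Sum>i\<in>UNIV. y s $ i) - ya s) * exp (c * s)" for s
    have bl: "bounded_linear (\<lambda>v::real^'n. \<Sum>i\<in>UNIV. v $ i)"
      by (intro bounded_linear_sum bounded_linear_vec_nth)
    have "(g has_field_derivative 0) (at s within {0..})" if s: "s \<in> {0..}" for s
    proof -
      have d1: "((\<lambda>s. \<Sum>i\<in>UNIV. y s $ i) has_vector_derivative (\<Sum>i\<in>UNIV. (A *v y s + b) $ i)) (at s within {0..})"
        using bounded_linear.has_vector_derivative[OF bl y_sol[of s]] s by simp
      have d1': "((\<lambda>s. \<Sum>i\<in>UNIV. y s $ i) has_real_derivative (- c * (\<Sum>i\<in>UNIV. y s $ i) + ((\<Sum>i\<in>UNIV. \<mu> i) - (\<Sum>i\<in>UNIV. lam i)))) (at s within {0..})"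
        using d1 unfolding has_real_derivative_iff_has_vector_derivative
        by (simp add: sumAv sumb[symmetric] sum.distrib)
      have d2: "(ya has_real_derivative (- c * ya s + ((\<Sum>i\<in>UNIV. \<mu> i) - (\<Sum>i\<in>UNIV. lam i)))) (at s within {0..})"
        using ya_sol[of s] s unfolding sumL by simp
      have de: "((\<lambda>s. exp (c * s)) has_real_derivative (exp (c * s) * (c * 1))) (at s within {0..})"
        by (auto intro!: derivative_eq_intros)
      have gd: "g = (\<lambda>s. ((\<lambda>s. \<Sum>i\<in>UNIV. y s $ i) s - ya s) * exp (c * s))" by (simp add: g_def fun_eq_iff)
      show ?thesis unfolding gd
        using DERIV_mult[OF DERIV_diff[OF d1' d2] de] by (simp add: algebra_simps)
    qed
    then obtain k where k: "\<forall>s\<in>{0..}. g s = k"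
      using has_field_derivative_zero_constant[of "{0..}" g] by (auto simp: convex_real_interval)
    have "g 0 = 0" using y0 by (simp add: g_def)
    hence "g t = 0" using k t by auto
    thus ?thesis by (simp add: g_def)
  qed
  show ?thesis using part1 part2 by blast
qed

end
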